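(* For every $(i,j)\in\mathcal I_0$ we have $E_{ij}F_{\mathcal I_1}=F_{\mathcal I_1}E_{ij}$ in $U_q$.
   Context: Let $m,n\ge 1$, let $q$ be an indeterminate, and let indices range over $[1,m+n]$. Put $q_i=q$ if $i\le m$ and $q_i=q^{-1}$ if $i>m$. Let $\mathcal I_0=\{(i,j):1\le i<j\le m \text{ or } m+1\le i<j\le m+n\}$, $\mathcal I_1=\{(i,j):1\le i\le m<j\le m+n\}$. The quantum supergroup $U_q=U_q(\mathfrak{gl}(m|n))$ is the associative $\mathbb C(q)$-superalgebra generated by $K_j^{\pm1}$ ($j\in[1,m+n]$) and $E_{i,i+1},F_{i,i+1}$ ($1\le i<m+n$), where $K_j^{\pm1}$ and $E_{i,i+1},F_{i,i+1}$ for $i\ne m$ are even and $E_{m,m+1},F_{m,m+1}$ are odd, subject to: $K_iK_j=K_jK_i$, $K_iK_i^{-1}=1$; $K_iE_{j,j+1}K_i^{-1}=q_i^{\delta_{ij}-\delta_{i,j+1}}E_{j,j+1}$, $K_iF_{j,j+1}K_i^{-1}=q_i^{-(\delta_{ij}-\delta_{i,j+1})}F_{j,j+1}$; $[E_{i,i+1},F_{j,j+1}]=\delta_{ij}\frac{K_iK_{i+1}^{-1}-K_i^{-1}K_{i+1}}{q_i-q_i^{-1}}$; $E_{m,m+1}^2=F_{m,m+1}^2=0$; $E_{i,i+1}E_{j,j+1}=E_{j,j+1}E_{i,i+1}$ and $F_{i,i+1}F_{j,j+1}=F_{j,j+1}F_{i,i+1}$ for $|i-j|>1$; for $|i-j|=1$,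 $i\neq m$, and $X\in\{E,F\}$: $X_{i,i+1}^2X_{j,j+1}-(q+q^{-1})X_{i,i+1}X_{j,j+1}X_{i,i+1}+X_{j,j+1}X_{i,i+1}^2=0$; and $[E_{m-1,m+2},E_{m,m+1}]=[F_{m-1,m+2},F_{m,m+1}]=0$. Here for homogeneous $x,y$, $[x,y]=xy-(-1)^{\bar x\bar y}yx$. For $i<j$ with $j>i+1$, $E_{ij}=E_{ic}E_{cj}-q_c^{-1}E_{cj}E_{ic}$ and $F_{ij}=-q_cF_{ic}F_{cj}+F_{cj}F_{ic}$ for $i<c<j$ (independent of $c$); $E_{ij},F_{ij}$ are odd iff $(i,j)\in\mathcal I_1$. Order on $\mathcal I_1$: $(i,j)\prec(s,t)$ iff $j>t$, or $j=t$ and $i<s$. $F_{\mathcal I_1}$ is the product of all $F_{ij}$, $(i,j)\in\mathcal I_1$, taken in increasing $\prec$-order. *)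

theory Defs
  imports "HOL-Computational_Algebra.Polynomial" "HOL-Computational_Algebra.Fraction_Field"
begin

type_synonym ratq = "complex poly fract"

definition qq :: ratq where "qq = Fract [:0, 1:] 1"

definition qi :: "nat \<Rightarrow> nat \<Rightarrow> ratq" where
  "qi m i = (if i \<le> m then qq else inverse qq)"

definition kexp :: "nat \<Rightarrow> nat \<Rightarrow> int" where
  "kexp i j = (if i = j then 1 else 0) - (if i = j + 1 then 1 else 0)"

text \<open>Root vectors E_{i,i+k} (k >= 1), defined recursively with c = i+1:
  E_{ij} = E_{i,i+1} E_{i+1,j} - q_{i+1}^{-1} E_{i+1,j} E_{i,i+1}.
  Here E i stands for E_{i,i+1} and phi is the structure map C(q) -> A.\<close>
fun Eroot :: "(ratq \<Rightarrow> 'a::ring_1) \<Rightarrow> nat \<Rightarrow> (nat \<Rightarrow> 'a) \<Rightarrow> nat \<Rightarrow> nat \<Rightarrow> 'a" where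
  "Eroot phi m E i 0 = 0"
| "Eroot phi m E i (Suc 0) = E i"
| "Eroot phi m E i (Suc (Suc k)) =
     E i * Eroot phi m E (i + 1) (Suc k)
     - phi (inverse (qi m (i + 1))) * Eroot phi m E (i + 1) (Suc k) * E i"

fun Froot :: "(ratq \<Rightarrow> 'a::ring_1) \<Rightarrow> nat \<Rightarrow> (nat \<Rightarrow> 'a) \<Rightarrow> nat \<Rightarrow> nat \<Rightarrow> 'a" where
  "Froot phi m F i 0 = 0"
| "Froot phi m F i (Suc 0) = F i"
| "Froot phi m F i (Suc (Suc k)) =
     - (phi (qi m (i + 1)) * F i * Froot phi m F (i + 1) (Suc k))
     + Froot phi m F (i + 1) (Suc k) * F i"

definition Eij :: "(ratq \<Rightarrow> 'a::ring_1) \<Rightarrow> nat \<Rightarrow> (nat \<Rightarrow> 'a) \<Rightarrow> nat \<Rightarrow> nat \<Rightarrow> 'a" where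
  "Eij phi m E i j = Eroot phi m E i (j - i)"

definition Fij :: "(ratq \<Rightarrow> 'a::ring_1) \<Rightarrow> nat \<Rightarrow> (nat \<Rightarrow> 'a) \<Rightarrow> nat \<Rightarrow> nat \<Rightarrow> 'a" where
  "Fij phi m F i j = Froot phi m F i (j - i)"

definition I0 :: "nat \<Rightarrow> nat \<Rightarrow> (nat \<times> nat) set" where
  "I0 m n = {(i, j). (1 \<le> i \<and> i < j \<and> j \<le> m) \<or> (m + 1 \<le> i \<and> i < j \<and> j \<le> m + n)}"

definition I1 :: "nat \<Rightarrow> nat \<Rightarrow> (nat \<times> nat) set" where
  "I1 m n = {(i, j). 1 \<le> i \<and> i \<le> m \<and> m < j \<and> j \<le> m + n}"

text \<open>I_1 listed in increasing order: (i,j) < (s,t) iff j > t, or j = t and i < s.\<close>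
definition I1_list :: "nat \<Rightarrow> nat \<Rightarrow> (nat \<times> nat) list" where
  "I1_list m n = concat (map (\<lambda>j. map (\<lambda>i. (i, j)) [1..<m + 1]) (rev [m + 1..<m + n + 1]))"

definition FI1 :: "(ratq \<Rightarrow> 'a::ring_1) \<Rightarrow> nat \<Rightarrow> nat \<Rightarrow> (nat \<Rightarrow> 'a) \<Rightarrow> 'a" where
  "FI1 phi m n F = prod_list (map (\<lambda>(i, j). Fij phi m F i j) (I1_list m n))"

text \<open>The defining relations of U_q(gl(m|n)) realised in an associative unital C(q)-algebra A
  (a ring A with a ring homomorphism phi : C(q) -> A into the centre of A).
  K i = K_i, Kinv i = K_i^{-1}, E i = E_{i,i+1}, F i = F_{i,i+1}.
  Supercommutators are written out using the parities (only E_{m,m+1}, F_{m,m+1},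
  and E_{m-1,m+2} are odd among the elements occurring).\<close>
definition uq_rels :: "nat \<Rightarrow> nat \<Rightarrow> (ratq \<Rightarrow> 'a::ring_1) \<Rightarrow> (nat \<Rightarrow> 'a) \<Rightarrow> (nat \<Rightarrow> 'a)
    \<Rightarrow> (nat \<Rightarrow> 'a) \<Rightarrow> (nat \<Rightarrow> 'a) \<Rightarrow> bool" where
  "uq_rels m n phi K Kinv E F \<longleftrightarrow>
     \<comment> \<open>C(q)-algebra structure\<close>
     phi 0 = 0 \<and> phi 1 = 1 \<and>
     (\<forall>a b. phi (a + b) = phi a + phi b) \<and>
     (\<forall>a b. phi (a * b) = phi a * phi b) \<and>
     (\<forall>a x. phi a * x = x * phi a) \<and>
     \<comment> \<open>Cartan part\<close>
     (\<forall>i\<in>{1..m+n}. \<forall>j\<in>{1..m+n}. K i * K j = K j * K i) \<and>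
     (\<forall>i\<in>{1..m+n}. K i * Kinv i = 1 \<and> Kinv i * K i = 1) \<and>
     (\<forall>i\<in>{1..m+n}. \<forall>j\<in>{1..<m+n}.
        K i * E j * Kinv i = phi (qi m i powi kexp i j) * E j \<and>
        K i * F j * Kinv i = phi (qi m i powi (- kexp i j)) * F j) \<and>
     \<comment> \<open>[E_i, F_j] = delta_ij (K_i K_{i+1}^{-1} - K_i^{-1} K_{i+1}) / (q_i - q_i^{-1})\<close>
     (\<forall>i\<in>{1..<m+n}. \<forall>j\<in>{1..<m+n}.
        E i * F j - (if i = m \<and> j = m then -1 else 1) * (F j * E i) =
        (if i = j then phi (inverse (qi m i - inverse (qi m i)))
                       * (K i * Kinv (i + 1) - Kinv i * K (i + 1))
         else 0)) \<and>
     E m * E m = 0 \<and> F m * F m = 0 \<and>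
     (\<forall>i\<in>{1..<m+n}. \<forall>j\<in>{1..<m+n}. (i + 1 < j \<or> j + 1 < i) \<longrightarrow>
        E i * E j = E j * E i \<and> F i * F j = F j * F i) \<and>
     \<comment> \<open>Serre relations\<close>
     (\<forall>i\<in>{1..<m+n}. \<forall>j\<in>{1..<m+n}. (i = j + 1 \<or> j = i + 1) \<and> i \<noteq> m \<longrightarrow>
        E i * E i * E j - phi (qq + inverse qq) * (E i * E j * E i) + E j * E i * E i = 0 \<and>
        F i * F i * F j - phi (qq + inverse qq) * (F i * F j * F i) + F j * F i * F i = 0) \<and>
     \<comment> \<open>[E_{m-1,m+2}, E_{m,m+1}] = 0 (both odd, so anticommutator); only meaningful if m,n >= 2\<close>
     (2 \<le> m \<and> 2 \<le> n \<longrightarrow>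
        Eij phi m E (m - 1) (m + 2) * E m + E m * Eij phi m E (m - 1) (m + 2) = 0 \<and>
        Fij phi m F (m - 1) (m + 2) * F m + F m * Fij phi m F (m - 1) (m + 2) = 0)"

end

theory Submission
  imports Defs
begin

lemma qq_nz: "qq \<noteq> 0" unfolding qq_def by (simp add: eq_fract Zero_fract_def)
lemma qq_sq_fact: "qq * qq = Fract [:0,0,1:] 1" unfolding qq_def by (simp)
lemma q2_nz: "qq + inverse qq \<noteq> 0"
proof
  assume "qq + inverse qq = 0"
  then have "qq * (qq + inverse qq) = 0" by simp
  then have "1 + qq * qq = 0" using qq_nz by (simp add: algebra_simps)
  then have "qq * qq = -1" by (metis add.commute add_eq_0_iff)
  then show False unfolding qq_sq_fact by (simp add: eq_fract One_fract_def one_pCons)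
qed
lemma sc_q: "qq*qq - qq*(qq + inverse qq) + 1 = 0" using qq_nz by (simp add: algebra_simps)
lemma sc_qi: "inverse qq*inverse qq - inverse qq*(qq + inverse qq) + 1 = 0" using qq_nz by (simp add: algebra_simps)
lemma qq_sq: "qq * qq = Fract [:0,0,1:] 1" unfolding qq_def by (simp)
lemma qq_sq1: "qq * qq \<noteq> 1" unfolding qq_sq by (simp add: eq_fract One_fract_def one_pCons)
lemma qq_sqm1: "qq * qq \<noteq> -1" unfolding qq_sq by (simp add: eq_fract One_fract_def one_pCons)

locale uq =
  fixes m n :: nat and phi :: "ratq \<Rightarrow> 'a::ring_1" and K Kinv E F :: "nat \<Rightarrow> 'a"
  assumes m1: "1 \<le> m" and n1: "1 \<le> n" and rels: "uq_rels m n phi K Kinv E F"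
begin

lemma phi0[simp]: "phi 0 = 0" using rels unfolding uq_rels_def by (elim conjE) blast
lemma phi1[simp]: "phi 1 = 1" using rels unfolding uq_rels_def by (elim conjE) blast
lemma phi_add: "phi (a + b) = phi a + phi b" using rels unfolding uq_rels_def by (elim conjE) blast
lemma phi_mult: "phi (a * b) = phi a * phi b" using rels unfolding uq_rels_def by (elim conjE) blast
lemma phi_central: "phi a * x = x * phi a" using rels unfolding uq_rels_def by (elim conjE) blast
lemma phi_minus: "phi (- a) = - phi a"
  using phi_add[of a "-a"] minus_unique[of "phi a" "phi (-a)"] by simp
lemma phi_diff: "phi (a - b) = phi a - phi b"
  using phi_add[of a "-b"] phi_minus[of b] by simp

lemma phi_mm: "phi a * phi b = phi (a * b)" by (simp add: phi_mult)
lemma phi_mm2: "phi a * (phi b * x) = phi (a * b) * x" by (simp add: phi_mult mult.assoc)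
lemma phi_c1: "NO_MATCH (phi b) x \<Longrightarrow> x * phi a = phi a * x" by (simp add: phi_central)
lemma phi_c2: "NO_MATCH (phi b) x \<Longrightarrow> x * (phi a * y) = phi a * (x * y)"
  by (metis mult.assoc phi_central)

lemmas sc = phi_mm phi_mm2 phi_c1 phi_c2

lemma phi_inv: "a \<noteq> 0 \<Longrightarrow> phi a * phi (inverse a) = 1"
  by (simp add: phi_mm)
lemma phi_inv2: "a \<noteq> 0 \<Longrightarrow> phi (inverse a) * phi a = 1"
  by (simp add: phi_mm)


lemma qi_nz[simp]: "qi m i \<noteq> 0" by (simp add: qi_def qq_nz)

lemma K_inv: "i \<in> {1..m+n} \<Longrightarrow> K i * Kinv i = 1"
  using rels unfolding uq_rels_def by (elim conjE) blast
lemma Kinv_K: "i \<in> {1..m+n} \<Longrightarrow> Kinv i * K i = 1"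
  using rels unfolding uq_rels_def by (elim conjE) blast
lemma KFK: "i \<in> {1..m+n} \<Longrightarrow> j \<in> {1..<m+n} \<Longrightarrow>
   K i * F j * Kinv i = phi (qi m i powi (- kexp i j)) * F j"
  using rels unfolding uq_rels_def by (elim conjE) blast

lemma KF: assumes "i \<in> {1..m+n}" "j \<in> {1..<m+n}"
  shows "K i * F j = phi (qi m i powi (- kexp i j)) * (F j * K i)"
proof -
  have "K i * F j = (K i * F j * Kinv i) * K i" using Kinv_K[OF assms(1)] by (simp add: mult.assoc)
  also have "\<dots> = phi (qi m i powi (- kexp i j)) * F j * K i" using KFK[OF assms] by simp
  finally show ?thesis by (simp add: mult.assoc)
qed

lemma KinvF: assumes "i \<in> {1..m+n}" "j \<in> {1..<m+n}"
  shows "Kinv i * F j = phi (qi m i powi (kexp i j)) * (F j * Kinv i)"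
proof -
  let ?w = "qi m i powi (- kexp i j)"
  have w: "?w \<noteq> 0" by simp
  have "F j * Kinv i = Kinv i * (K i * F j * Kinv i)" using Kinv_K[OF assms(1)] by (simp add: mult.assoc[symmetric])
  also have "\<dots> = phi ?w * (Kinv i * F j)" using KFK[OF assms] by (simp add: sc)
  finally have "phi (inverse ?w) * (F j * Kinv i) = phi (inverse ?w) * (phi ?w * (Kinv i * F j))" by simp
  also have "\<dots> = Kinv i * F j" using w by (simp add: sc)
  finally show ?thesis by (simp add: power_int_minus)
qed

lemma EF_raw: "i \<in> {1..<m+n} \<Longrightarrow> j \<in> {1..<m+n} \<Longrightarrow>
        E i * F j - (if i = m \<and> j = m then -1 else 1) * (F j * E i) =
        (if i = j then phi (inverse (qi m i - inverse (qi m i)))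
                       * (K i * Kinv (i + 1) - Kinv i * K (i + 1))
         else 0)"
  using rels unfolding uq_rels_def by (elim conjE) blast

lemma EF_comm: "i \<in> {1..<m+n} \<Longrightarrow> j \<in> {1..<m+n} \<Longrightarrow> i \<noteq> j \<Longrightarrow> E i * F j = F j * E i"
  using EF_raw[of i j] by auto

lemma EF_same: "i \<in> {1..<m+n} \<Longrightarrow> i \<noteq> m \<Longrightarrow>
   E i * F i = F i * E i + phi (inverse (qi m i - inverse (qi m i))) * (K i * Kinv (i + 1) - Kinv i * K (i + 1))"
  using EF_raw[of i i] by (auto simp: algebra_simps)

lemma Fm2: "F m * F m = 0" using rels unfolding uq_rels_def by (elim conjE) blast

lemma FF_far: "i \<in> {1..<m+n} \<Longrightarrow> j \<in> {1..<m+n} \<Longrightarrow> i + 1 < j \<or> j + 1 < i \<Longrightarrow> F i * F j = F j * F i"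
  using rels unfolding uq_rels_def by (elim conjE) blast

lemma Serre: "i \<in> {1..<m+n} \<Longrightarrow> j \<in> {1..<m+n} \<Longrightarrow> (i = j + 1 \<or> j = i + 1) \<Longrightarrow> i \<noteq> m \<Longrightarrow>
   F i * F i * F j - phi (qq + inverse qq) * (F i * F j * F i) + F j * F i * F i = 0"
  using rels unfolding uq_rels_def by (elim conjE) blast

lemma quartic: "2 \<le> m \<Longrightarrow> 2 \<le> n \<Longrightarrow>
   Fij phi m F (m - 1) (m + 2) * F m + F m * Fij phi m F (m - 1) (m + 2) = 0"
  using rels unfolding uq_rels_def by (elim conjE) blast

abbreviation FF where "FF i j \<equiv> Fij phi m F i j"

lemma FF_1[simp]: "FF i (Suc i) = F i" by (simp add: Fij_def)
lemma FF_0: "j \<le> i \<Longrightarrow> FF i j = 0" by (simp add: Fij_def)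

lemma FF_left: assumes "i + 2 \<le> j"
  shows "FF i j = - (phi (qi m (i+1)) * F i * FF (i+1) j) + FF (i+1) j * F i"
proof -
  define d where "d = j - i - 2"
  have d: "j - i = Suc (Suc d)" using assms unfolding d_def by simp
  have "j - (i+1) = Suc d" using d by simp
  then show ?thesis using d by (simp add: Fij_def)
qed

lemma wt_step: assumes "X * x = phi a * (x * X)" "X * W = phi b * (W * X)"
  shows "X * (-(phi s * x * W) + W * x) = phi (a * b) * ((-(phi s * x * W) + W * x) * X)"
proof -
  have 1: "X * (x * t) = phi a * (x * (X * t))" for t using assms(1) by (metis mult.assoc phi_c2)
  have 2: "X * (W * t) = phi b * (W * (X * t))" for t using assms(2) by (metis mult.assoc phi_c2)
  show ?thesis by (simp add: algebra_simps sc 1 2 assms)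
qed

lemma FF_wt: assumes "i < j" and "\<And>l. i \<le> l \<Longrightarrow> l < j \<Longrightarrow> X * F l = phi (w l) * (F l * X)"
  shows "X * FF i j = phi (\<Prod>l\<in>{i..<j}. w l) * (FF i j * X)"
  using assms
proof (induction "j - i" arbitrary: i)
  case 0 then show ?case by simp
next
  case (Suc d)
  show ?case
  proof (cases "j = Suc i")
    case True then show ?thesis using Suc.prems by simp
  next
    case False
    then have ij: "i + 2 \<le> j" using Suc.prems by simp
    have IH: "X * FF (i+1) j = phi (\<Prod>l\<in>{i+1..<j}. w l) * (FF (i+1) j * X)"
      using Suc.hyps(1)[of "i+1"] Suc.hyps(2) Suc.prems ij by simp
    have Xi: "X * F i = phi (w i) * (F i * X)" using Suc.prems by simp
    have pr: "(\<Prod>l\<in>{i..<j}. w l) = w i * (\<Prod>l\<in>{i+1..<j}. w l)"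
      using ij by (simp add: prod.atLeast_Suc_lessThan)
    have L: "FF i j = - (phi (qi m (i+1)) * F i * FF (i+1) j) + FF (i+1) j * F i"
      by (rule FF_left[OF ij])
    show ?thesis unfolding L pr by (rule wt_step[OF Xi IH])
  qed
qed

lemma FF_comm: assumes "\<And>l. i \<le> l \<Longrightarrow> l < j \<Longrightarrow> X * F l = F l * X"
  shows "X * FF i j = FF i j * X"
proof (cases "i < j")
  case True
  have "X * FF i j = phi (\<Prod>l\<in>{i..<j}. 1) * (FF i j * X)"
    by (rule FF_wt[OF True]) (use assms in simp)
  then show ?thesis by simp
next
  case False then show ?thesis by (simp add: FF_0)
qed

lemma assoc3: assumes xz: "x * z = z * x"
  shows "- (phi s1 * x * (- (phi s2 * y * z) + z * y)) + (- (phi s2 * y * z) + z * y) * x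
       = - (phi s2 * (- (phi s1 * x * y) + y * x) * z) + z * (- (phi s1 * x * y) + y * x)"
proof -
  have xz': "x * (z * w) = z * (x * w)" for w using xz by (metis mult.assoc)
  show ?thesis by (simp add: algebra_simps sc xz xz')
qed

lemma F_far': "i \<in> {1..<m+n} \<Longrightarrow> j \<in> {1..<m+n} \<Longrightarrow> i + 1 < j \<or> j + 1 < i \<Longrightarrow> F i * (F j * w) = F j * (F i * w)"
  using FF_far by (metis mult.assoc)

lemma FF_right: assumes "i + 2 \<le> j" "1 \<le> i" "j \<le> m + n"
  shows "FF i j = - (phi (qi m (j-1)) * FF i (j-1) * F (j-1)) + F (j-1) * FF i (j-1)"
  using assms
proof (induction "j - i" arbitrary: i)
  case 0 then show ?case by simp
next
  case (Suc d)
  show ?case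
  proof (cases "j = i + 2")
    case True
    then show ?thesis using FF_left[of i j] by (simp add: numeral_2_eq_2)
  next
    case False
    then have ij: "i + 3 \<le> j" using Suc.prems by simp
    have IH: "FF (i+1) j = - (phi (qi m (j-1)) * FF (i+1) (j-1) * F (j-1)) + F (j-1) * FF (i+1) (j-1)"
      using Suc.hyps(1)[of "i+1"] Suc.hyps(2) Suc.prems ij by simp
    have L2: "FF i (j-1) = - (phi (qi m (i+1)) * F i * FF (i+1) (j-1)) + FF (i+1) (j-1) * F i"
      using FF_left[of i "j-1"] ij by simp
    have xz: "F i * F (j-1) = F (j-1) * F i" using FF_far[of i "j-1"] Suc.prems ij by simp
    have L1: "FF i j = - (phi (qi m (i+1)) * F i * FF (i+1) j) + FF (i+1) j * F i"
      by (rule FF_left) (use ij in simp)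
    show ?thesis unfolding L1 IH L2 by (rule assoc3[OF xz])
  qed
qed

lemma serre_ext1: assumes S: "x*x*u - phi c * (x*u*x) + u*x*x = 0" and xW: "x * W = W * x"
  shows "x*x*(- (phi s * u * W) + W * u) - phi c * (x*(- (phi s * u * W) + W * u)*x) + (- (phi s * u * W) + W * u)*x*x = 0"
proof -
  have xW': "x * (W * t) = W * (x * t)" for t using xW by (metis mult.assoc)
  have "x*x*(- (phi s * u * W) + W * u) - phi c * (x*(- (phi s * u * W) + W * u)*x) + (- (phi s * u * W) + W * u)*x*x
     = - (phi s * ((x*x*u - phi c * (x*u*x) + u*x*x) * W)) + W * (x*x*u - phi c * (x*u*x) + u*x*x)"
    by (simp add: algebra_simps sc xW xW')
  then show ?thesis using S by simp
qed

lemma serre_ext2: assumes S: "x*x*u - phi c * (x*u*x) + u*x*x = 0" and xW: "x * W = W * x"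
  shows "x*x*(- (phi s * W * u) + u * W) - phi c * (x*(- (phi s * W * u) + u * W)*x) + (- (phi s * W * u) + u * W)*x*x = 0"
proof -
  have xW': "x * (W * t) = W * (x * t)" for t using xW by (metis mult.assoc)
  have "x*x*(- (phi s * W * u) + u * W) - phi c * (x*(- (phi s * W * u) + u * W)*x) + (- (phi s * W * u) + u * W)*x*x
     = - (phi s * (W * (x*x*u - phi c * (x*u*x) + u*x*x))) + (x*x*u - phi c * (x*u*x) + u*x*x) * W"
    by (simp add: algebra_simps sc xW xW')
  then show ?thesis using S by simp
qed

lemma odd_sq_core: assumes YY: "Y * Y = 0" and S: "x*x*Y - phi c * (x*Y*x) + Y*x*x = 0" and c: "c \<noteq> 0"
  shows "x * (Y * (x * Y)) = Y * (x * (Y * x))" and "Y * (x * (x * Y)) = phi c * (Y * (x * (Y * x)))"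
proof -
  have YY': "Y * (Y * t) = 0" for t using YY by (metis mult.assoc mult_zero_left)
  have "Y * (x*x*Y - phi c * (x*Y*x) + Y*x*x) = 0" using S by simp
  then have e1: "Y * (x * (x * Y)) = phi c * (Y * (x * (Y * x)))"
    by (simp add: algebra_simps sc YY')
  have "(x*x*Y - phi c * (x*Y*x) + Y*x*x) * Y = 0" using S by simp
  then have e2: "Y * (x * (x * Y)) = phi c * (x * (Y * (x * Y)))"
    by (simp add: algebra_simps sc YY YY')
  have "phi c * (x * (Y * (x * Y))) = phi c * (Y * (x * (Y * x)))" using e1 e2 by simp
  then have "phi (inverse c) * (phi c * (x * (Y * (x * Y)))) = phi (inverse c) * (phi c * (Y * (x * (Y * x))))" by simp
  then show "x * (Y * (x * Y)) = Y * (x * (Y * x))" using c by (simp add: sc)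
  show "Y * (x * (x * Y)) = phi c * (Y * (x * (Y * x)))" by (rule e1)
qed

lemma odd_sq1: assumes YY: "Y * Y = 0" and S: "x*x*Y - phi c * (x*Y*x) + Y*x*x = 0" and c: "c \<noteq> 0"
   and sc0: "s*s - s*c + 1 = 0"
  shows "(- (phi s * x * Y) + Y * x) * (- (phi s * x * Y) + Y * x) = 0"
proof -
  have YY': "Y * (Y * t) = 0" for t using YY by (metis mult.assoc mult_zero_left)
  note core = odd_sq_core[OF YY S c]
  let ?B = "Y * (x * (Y * x))"
  have "(- (phi s * x * Y) + Y * x) * (- (phi s * x * Y) + Y * x) = phi (s*s) * ?B - phi (s*c) * ?B + ?B"
    by (simp add: algebra_simps sc YY' core)
  also have "\<dots> = phi (s*s - s*c + 1) * ?B" by (simp add: phi_add phi_diff algebra_simps)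
  finally show ?thesis using sc0 by simp
qed

lemma odd_sq2: assumes YY: "Y * Y = 0" and S: "x*x*Y - phi c * (x*Y*x) + Y*x*x = 0" and c: "c \<noteq> 0"
   and sc0: "s*s - s*c + 1 = 0"
  shows "(- (phi s * Y * x) + x * Y) * (- (phi s * Y * x) + x * Y) = 0"
proof -
  have YY': "Y * (Y * t) = 0" for t using YY by (metis mult.assoc mult_zero_left)
  note core = odd_sq_core[OF YY S c]
  let ?B = "Y * (x * (Y * x))"
  have "(- (phi s * Y * x) + x * Y) * (- (phi s * Y * x) + x * Y) = phi (s*s) * ?B - phi (s*c) * ?B + ?B"
    by (simp add: algebra_simps sc YY' core)
  also have "\<dots> = phi (s*s - s*c + 1) * ?B" by (simp add: phi_add phi_diff algebra_simps)
  finally show ?thesis using sc0 by simp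
qed

lemma F_range: "1 \<le> l \<Longrightarrow> l < m + n \<Longrightarrow> l \<in> {1..<m+n}" by simp

lemma FF_comm_F: assumes "1 \<le> i" "j \<le> m + n" "1 \<le> p" "p < m + n" "p + 1 < i \<or> j < p"
  shows "F p * FF i j = FF i j * F p"
  by (rule FF_comm) (use assms in \<open>auto intro!: FF_far\<close>)

lemma FF_sq: assumes "1 \<le> a" "a \<le> m" "m < b" "b \<le> m + n"
  shows "FF a b * FF a b = 0"
  using assms
proof (induction "b - a" arbitrary: a b rule: less_induct)
  case less
  show ?case
  proof (cases "b = a + 1")
    case True
    then have "a = m" using less.prems by simp
    then show ?thesis using True Fm2 by simp
  next
    case False
    then have ab: "a + 2 \<le> b" using less.prems by simp
    show ?thesis
    proof (cases "m + 2 \<le> b")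
      case True
      note mb = True
      have YY: "FF a (b-1) * FF a (b-1) = 0" by (rule less.hyps) (use less.prems True in auto)
      have S: "F (b-1) * F (b-1) * FF a (b-1) - phi (qq + inverse qq) * (F (b-1) * FF a (b-1) * F (b-1))
             + FF a (b-1) * F (b-1) * F (b-1) = 0"
      proof (cases "a = b - 2")
        case True
        have e: "Suc (b-2) = b - 1" using ab by simp
        have "FF a (b-1) = F (b-2)" using FF_1[of "b-2"] e True by simp
        moreover have "F (b-1) * F (b-1) * F (b-2) - phi (qq + inverse qq) * (F (b-1) * F (b-2) * F (b-1))
             + F (b-2) * F (b-1) * F (b-1) = 0" by (rule Serre) (use less.prems ab mb in auto)
        ultimately show ?thesis by simp
      next
        case False
        then have ab3: "a + 2 \<le> b - 1" using ab by simp
        have Sb: "F (b-1) * F (b-1) * F (b-2) - phi (qq + inverse qq) * (F (b-1) * F (b-2) * F (b-1))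
             + F (b-2) * F (b-1) * F (b-1) = 0" by (rule Serre) (use less.prems ab mb in auto)
        have xW: "F (b-1) * FF a (b-2) = FF a (b-2) * F (b-1)"
          by (rule FF_comm_F) (use less.prems ab mb in auto)
        have "FF a (b-1) = - (phi (qi m (b-2)) * FF a (b-2) * F (b-2)) + F (b-2) * FF a (b-2)"
          using FF_right[of a "b-1"] ab3 less.prems by (simp add: numeral_2_eq_2)
        then show ?thesis using serre_ext2[OF Sb xW] by simp
      qed
      have "\<not> b - 1 \<le> m" using mb by arith
      then have q: "qi m (b-1) = inverse qq" by (simp add: qi_def)
      have Z: "FF a b = - (phi (inverse qq) * FF a (b-1) * F (b-1)) + F (b-1) * FF a (b-1)"
        using FF_right[of a b] ab less.prems q by simp
      show ?thesis unfolding Z by (rule odd_sq2[OF YY S q2_nz sc_qi])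
    next
      case False
      then have bm: "b = m + 1" using less.prems by simp
      then have am: "a < m" using ab by simp
      have YY: "FF (a+1) b * FF (a+1) b = 0" by (rule less.hyps) (use less.prems am in auto)
      have S: "F a * F a * FF (a+1) b - phi (qq + inverse qq) * (F a * FF (a+1) b * F a)
             + FF (a+1) b * F a * F a = 0"
      proof (cases "b = a + 2")
        case True
        then have "FF (a+1) b = F (a+1)" by simp
        moreover have "F a * F a * F (a+1) - phi (qq + inverse qq) * (F a * F (a+1) * F a)
             + F (a+1) * F a * F a = 0" by (rule Serre) (use less.prems am bm in auto)
        ultimately show ?thesis by simp
      next
        case False
        then have ab3: "a + 3 \<le> b" using ab by simp
        have Sb: "F a * F a * F (a+1) - phi (qq + inverse qq) * (F a * F (a+1) * F a)
             + F (a+1) * F a * F a = 0" by (rule Serre) (use less.prems am bm in auto)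
        have xW: "F a * FF (a+2) b = FF (a+2) b * F a"
          by (rule FF_comm_F) (use less.prems am bm in auto)
        have "FF (a+1) b = - (phi (qi m (a+2)) * F (a+1) * FF (a+2) b) + FF (a+2) b * F (a+1)"
          using FF_left[of "a+1" b] ab3 by simp
        then show ?thesis using serre_ext1[OF Sb xW] by simp
      qed
      have q: "qi m (a+1) = qq" using am by (simp add: qi_def)
      have Z: "FF a b = - (phi qq * F a * FF (a+1) b) + FF (a+1) b * F a"
        using FF_left[of a b] ab am q by simp
      show ?thesis unfolding Z by (rule odd_sq1[OF YY S q2_nz sc_q])
    qed
  qed
qed

lemma r5_core:
  assumes Wr: "W = -(phi s * v * z) + z * v"
  and Wl: "W = -(phi s * x * u) + u * x"
  and hv: "v * y = phi s * (y * v)"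
  and hu: "u * y = phi (inverse s) * (y * u)"
  and du: "z * y = u + phi s * (y * z)"
  and vdef: "v = -(phi s * x * y) + y * x"
  and s: "s \<noteq> 0" "1 + s*s \<noteq> 0"
  shows "y * W = W * y"
proof -
  have hv': "v * (y * t) = phi s * (y * (v * t))" for t using hv by (metis mult.assoc phi_c2)
  have hu': "u * (y * t) = phi (inverse s) * (y * (u * t))" for t using hu by (metis mult.assoc phi_c2)
  have du': "z * (y * t) = u * t + phi s * (y * (z * t))" for t using du by (metis mult.assoc distrib_right phi_c2)
  have E1: "W*y = phi s * (u*v) - phi s * (v*u) + phi (s*s) * (y*W)"
    by (simp add: Wr algebra_simps sc hv hv' du du')
  have E2: "u*v = -(phi s * (W*y)) + phi (inverse s) * (y*W) + v*u"
    using s by (simp add: Wl vdef algebra_simps sc hu hu')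
  have E3: "W*y = -(phi (s*s) * (W*y)) + y*W + phi (s*s) * (y*W)"
    using E1 s by (simp add: E2 algebra_simps sc)
  have "phi (1 + s*s) * (W*y) = phi (1 + s*s) * (y*W)"
  proof -
    have "phi (1 + s*s) * (W*y) = W*y + phi (s*s) * (W*y)" by (simp add: phi_add algebra_simps)
    also have "\<dots> = y*W + phi (s*s) * (y*W)" using E3 by (simp add: algebra_simps)
    also have "\<dots> = phi (1 + s*s) * (y*W)" by (simp add: phi_add algebra_simps)
    finally show ?thesis .
  qed
  then have "phi (inverse (1 + s*s)) * (phi (1 + s*s) * (W*y)) = phi (inverse (1 + s*s)) * (phi (1 + s*s) * (y*W))"
    by simp
  then show ?thesis using s by (simp add: sc)
qed

lemma r5_base:
  assumes S1: "y*y*x - phi c*(y*x*y) + x*y*y = 0" and S2: "y*y*z - phi c*(y*z*y) + z*y*y = 0"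
  and xz: "x*z = z*x" and c: "c = s + inverse s" and s: "s \<noteq> 0" "1 + s*s \<noteq> 0"
  shows "y * (-(phi s * x * (-(phi s * y * z) + z * y)) + (-(phi s * y * z) + z * y) * x)
       = (-(phi s * x * (-(phi s * y * z) + z * y)) + (-(phi s * y * z) + z * y) * x) * y"
proof -
  define u where "u = -(phi s * y * z) + z * y"
  define v where "v = -(phi s * x * y) + y * x"
  define W where "W = -(phi s * x * u) + u * x"
  have Wr: "W = -(phi s * v * z) + z * v"
    unfolding W_def u_def v_def using assoc3[OF xz, of s s y] by (simp add: mult.assoc)
  have a1: "v * y - phi s * (y * v) = -(phi s * (y*y*x - phi c*(y*x*y) + x*y*y))"
    using s by (simp add: v_def c algebra_simps sc phi_add)
  have hv: "v * y = phi s * (y * v)" using a1 S1 by simp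
  have a2: "y * u - phi s * (u * y) = -(phi s * (y*y*z - phi c*(y*z*y) + z*y*y))"
    using s by (simp add: u_def c algebra_simps sc phi_add)
  have "y * u = phi s * (u * y)" using a2 S2 by simp
  then have "phi (inverse s) * (y * u) = phi (inverse s) * (phi s * (u * y))" by simp
  then have hu: "u * y = phi (inverse s) * (y * u)" using s by (simp add: sc)
  have du: "z * y = u + phi s * (y * z)" by (simp add: u_def mult.assoc)
  have "y * W = W * y" by (rule r5_core[OF Wr W_def hv hu du v_def s])
  then show ?thesis unfolding W_def u_def .
qed

lemma qi_cases: "qi m l = qq \<or> qi m l = inverse qq" by (simp add: qi_def)
lemma qi_c: "qq + inverse qq = qi m l + inverse (qi m l)" using qi_cases[of l] by auto
lemma qq_1s: "1 + qq * qq \<noteq> 0"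
proof
  assume h: "1 + qq * qq = 0"
  have "qq * qq = -1" using h by (metis add.commute add_eq_0_iff)
  then show False unfolding qq_sq_fact by (simp add: eq_fract One_fract_def one_pCons)
qed

lemma qqi_1s: "1 + inverse qq * inverse qq \<noteq> 0"
proof
  assume h: "1 + inverse qq * inverse qq = 0"
  have "qq * qq * (1 + inverse qq * inverse qq) = qq * qq + 1" using qq_nz by (simp add: field_simps)
  then have "qq * qq + 1 = 0" using h by simp
  then have "1 + qq * qq = 0" by (simp add: add.commute)
  then show False using qq_1s by blast
qed

lemma qi_1s: "1 + qi m l * qi m l \<noteq> 0"
  by (cases "l \<le> m") (simp_all add: qi_def qq_1s qqi_1s)

lemma comm_step1: assumes "y * x = x * y" "y * W = phi e * (W * y)"
  shows "y * (-(phi s * x * W) + W * x) = phi e * ((-(phi s * x * W) + W * x) * y)"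
proof -
  have a: "y * (x * t) = x * (y * t)" for t using assms(1) by (metis mult.assoc)
  have b: "y * (W * t) = phi e * (W * (y * t))" for t using assms(2) by (metis mult.assoc phi_c2)
  show ?thesis by (simp add: algebra_simps sc a b assms)
qed

lemma comm_step2: assumes "y * x = x * y" "y * W = phi e * (W * y)"
  shows "y * (-(phi s * W * x) + x * W) = phi e * ((-(phi s * W * x) + x * W) * y)"
proof -
  have a: "y * (x * t) = x * (y * t)" for t using assms(1) by (metis mult.assoc)
  have b: "y * (W * t) = phi e * (W * (y * t))" for t using assms(2) by (metis mult.assoc phi_c2)
  show ?thesis by (simp add: algebra_simps sc a b assms)
qed

definition eps :: "nat \<Rightarrow> ratq" where "eps l = (if l = m then -1 else 1)"

lemma F_inner: assumes "1 \<le> a" "a < l" "l + 1 < b" "b \<le> m + n"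
  shows "F l * FF a b = phi (eps l) * (FF a b * F l)"
  using assms
proof (induction "b - a" arbitrary: a b rule: less_induct)
  case less
  show ?case
  proof (cases "a + 1 < l")
    case True
    have IH: "F l * FF (a+1) b = phi (eps l) * (FF (a+1) b * F l)"
      by (rule less.hyps) (use less.prems True in auto)
    have x: "F l * F a = F a * F l" using FF_far[of l a] less.prems True by simp
    have ab': "a + 2 \<le> b" using less.prems by simp
    show ?thesis unfolding FF_left[OF ab'] using less.prems comm_step1[OF x IH] by simp
  next
    case False
    then have al: "a = l - 1" using less.prems by simp
    show ?thesis
    proof (cases "l + 2 < b")
      case True
      have IH: "F l * FF a (b-1) = phi (eps l) * (FF a (b-1) * F l)"
        by (rule less.hyps) (use less.prems True in auto)
      have x: "F l * F (b-1) = F (b-1) * F l" using FF_far[of l "b-1"] less.prems True by simp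
      have ab': "a + 2 \<le> b" "1 \<le> a" "b \<le> m + n" using less.prems by auto
      show ?thesis unfolding FF_right[OF ab'] using less.prems comm_step2[OF x IH] True by simp
    next
      case False
      then have bl: "b = l + 2" using less.prems by simp
      show ?thesis
      proof (cases "l = m")
        case True
        have "FF (m-1) (m+2) * F m + F m * FF (m-1) (m+2) = 0"
          using quartic less.prems al bl True by simp
        then have "F m * FF (m-1) (m+2) = - (FF (m-1) (m+2) * F m)"
          by (metis add.commute add_eq_0_iff)
        then show ?thesis using al bl True by (simp add: eps_def phi_minus)
      next
        case False
        have l1: "l - 1 + 1 = l" using less.prems by simp
        have S1: "F l * F l * F (l-1) - phi (qq + inverse qq) * (F l * F (l-1) * F l) + F (l-1) * F l * F l = 0"
          by (rule Serre) (use less.prems False al in auto)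
        have S2: "F l * F l * F (l+1) - phi (qq + inverse qq) * (F l * F (l+1) * F l) + F (l+1) * F l * F l = 0"
          by (rule Serre) (use less.prems False bl in auto)
        have xz: "F (l-1) * F (l+1) = F (l+1) * F (l-1)" using FF_far[of "l-1" "l+1"] less.prems al bl by auto
        have q: "qi m (l+1) = qi m l" using False by (simp add: qi_def)
        have W: "FF a b = -(phi (qi m l) * F (l-1) * (-(phi (qi m l) * F l * F (l+1)) + F (l+1) * F l))
                 + (-(phi (qi m l) * F l * F (l+1)) + F (l+1) * F l) * F (l-1)"
          using FF_left[of a b] FF_left[of l b] al bl l1 q by (simp add: Suc_diff_Suc numeral_2_eq_2)
        show ?thesis unfolding W eps_def using False
          r5_base[OF S1 S2 xz qi_c qi_nz qi_1s] by simp
      qed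
    qed
  qed
qed

lemma comm_step3: assumes "x * X = phi e1 * (X * x)" "W * X = phi e2 * (X * W)"
  shows "(-(phi s * x * W) + W * x) * X = phi (e1 * e2) * (X * (-(phi s * x * W) + W * x))"
proof -
  have a: "x * (X * t) = phi e1 * (X * (x * t))" for t using assms(1) by (metis mult.assoc phi_c2)
  have b: "W * (X * t) = phi e2 * (X * (W * t))" for t using assms(2) by (metis mult.assoc phi_c2)
  show ?thesis by (simp add: algebra_simps sc a b assms)
qed

lemma FF_nested: assumes "1 \<le> a" "a < c" "c < d" "d < b" "b \<le> m + n"
  shows "\<exists>e. FF c d * FF a b = phi e * (FF a b * FF c d)"
  using assms
proof (induction "d - c" arbitrary: c rule: less_induct)
  case less
  have x: "F c * FF a b = phi (eps c) * (FF a b * F c)" using F_inner less.prems by simp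
  show ?case
  proof (cases "d = c + 1")
    case True then show ?thesis using x by auto
  next
    case False
    then obtain e where IH: "FF (c+1) d * FF a b = phi e * (FF a b * FF (c+1) d)"
      using less.hyps[of "c+1"] less.prems by fastforce
    have cd: "c + 2 \<le> d" using False less.prems by simp
    show ?thesis unfolding FF_left[OF cd] using False less.prems comm_step3[OF x IH] by auto
  qed
qed

lemma FF_shared_right: assumes "1 \<le> p" "p < i" "i \<le> m" "m < k" "k \<le> m + n"
  shows "\<exists>c. c \<noteq> 0 \<and> FF i k * FF p k = phi c * (FF p k * FF i k)"
  using assms
proof (induction "i - p" arbitrary: p rule: less_induct)
  case less
  have YY: "FF i k * FF i k = 0" using FF_sq less.prems by simp
  have YY': "FF i k * (FF i k * t) = 0" for t using YY by (metis mult.assoc mult_zero_left)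
  show ?case
  proof (cases "p = i - 1")
    case True
    have pk: "p + 2 \<le> k" "p + 1 = i" using less.prems True by auto
    have e: "FF i k * FF p k = phi (- qi m i) * (FF p k * FF i k)"
      unfolding FF_left[OF pk(1)] pk(2) by (simp add: algebra_simps sc YY YY' phi_minus)
    show ?thesis by (rule exI[of _ "- qi m i"]) (use e in simp)
  next
    case False
    then have pi: "p + 1 < i" using less.prems by simp
    have "\<exists>c. c \<noteq> 0 \<and> FF i k * FF (p+1) k = phi c * (FF (p+1) k * FF i k)"
      by (rule less.hyps) (use less.prems pi in auto)
    then obtain c where c: "c \<noteq> 0" "FF i k * FF (p+1) k = phi c * (FF (p+1) k * FF i k)" by blast
    have x: "FF i k * F p = F p * FF i k"
      using FF_comm_F[of i k p] less.prems pi by simp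
    have pk: "p + 2 \<le> k" using less.prems by simp
    show ?thesis unfolding FF_left[OF pk] using less.prems c comm_step1[OF x c(2)] by auto
  qed
qed

lemma r3_core: assumes hby: "b*y = phi c * (y*b)" and ya: "y*A = phi d * (A*y)"
  and Adef: "A = -(phi s * b * f) + f * b" and s: "s \<noteq> 0"
  shows "b * (-(phi s * y * f) + f * y) = phi (inverse s * c) * ((-(phi s * y * f) + f * y) * b) + phi (c*d - inverse s) * (A * y)"
proof -
  have e: "phi s * (b * f) = f * b - A" using Adef by (simp add: mult.assoc)
  have "b * f = phi (inverse s) * (phi s * (b * f))" using s by (simp add: sc)
  then have bf: "b * f = phi (inverse s) * (f * b - A)" using e by simp
  have bf': "b * (f * t) = phi (inverse s) * (f * (b * t) - A * t)" for t
    using arg_cong[OF bf, of "\<lambda>z. z * t"] by (simp add: algebra_simps)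
  have hby': "b * (y * t) = phi c * (y * (b * t))" for t using hby by (metis mult.assoc phi_c2)
  have ya': "y * (A * t) = phi d * (A * (y * t))" for t using ya by (metis mult.assoc phi_c2)
  show ?thesis using s by (simp add: algebra_simps sc bf bf' hby hby' ya ya' phi_diff)
qed

lemma swap_inv: assumes "X * Y = phi w * (Y * X)" "w \<noteq> 0"
  shows "Y * X = phi (inverse w) * (X * Y)"
  using assms by (simp add: sc)

lemma HF: assumes "1 \<le> k" "k < m + n" "l \<in> {1..<m+n}"
  shows "K k * Kinv (k+1) * F l = phi (qi m k powi (- kexp k l) * qi m (k+1) powi (kexp (k+1) l)) * (F l * (K k * Kinv (k+1)))"
proof -
  have "K k * Kinv (k+1) * F l = K k * (Kinv (k+1) * F l)" by (simp add: mult.assoc)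
  also have "\<dots> = phi (qi m (k+1) powi (kexp (k+1) l)) * (K k * F l * Kinv (k+1))"
    using KinvF[of "k+1" l] assms by (simp add: sc mult.assoc)
  also have "\<dots> = phi (qi m (k+1) powi (kexp (k+1) l)) * (phi (qi m k powi (- kexp k l)) * (F l * K k) * Kinv (k+1))"
    using KF[of k l] assms by simp
  finally show ?thesis by (simp add: sc mult.assoc mult.commute)
qed

lemma H'F: assumes "1 \<le> k" "k < m + n" "l \<in> {1..<m+n}"
  shows "Kinv k * K (k+1) * F l = phi (qi m k powi (kexp k l) * qi m (k+1) powi (- kexp (k+1) l)) * (F l * (Kinv k * K (k+1)))"
proof -
  have "Kinv k * K (k+1) * F l = Kinv k * (K (k+1) * F l)" by (simp add: mult.assoc)
  also have "\<dots> = phi (qi m (k+1) powi (- kexp (k+1) l)) * (Kinv k * F l * K (k+1))"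
    using KF[of "k+1" l] assms by (simp add: sc mult.assoc)
  also have "\<dots> = phi (qi m (k+1) powi (- kexp (k+1) l)) * (phi (qi m k powi (kexp k l)) * (F l * Kinv k) * K (k+1))"
    using KinvF[of k l] assms by simp
  finally show ?thesis by (simp add: sc mult.assoc mult.commute)
qed

lemma E_comm_FF: assumes "1 \<le> k" "k < m + n" "1 \<le> i" "j \<le> m + n" "k < i \<or> j \<le> k"
  shows "E k * FF i j = FF i j * E k"
  by (rule FF_comm) (use assms in \<open>auto intro!: EF_comm\<close>)

lemma prod_delta_k: assumes "(k::nat) + 1 < j" and "\<And>l. l \<in> {k+1..<j} \<Longrightarrow> f l = (if l = k+1 then a else 1)"
  shows "(\<Prod>l\<in>{k+1..<j}. f l) = (a::ratq)"
proof -
  have "(\<Prod>l\<in>{k+1..<j}. f l) = (\<Prod>l\<in>{k+1..<j}. if l = k+1 then a else 1)"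
    by (rule prod.cong) (use assms in auto)
  also have "\<dots> = a" using assms(1) by (subst prod.delta) auto
  finally show ?thesis .
qed

lemma H_Y: assumes "1 \<le> k" "k + 1 < j" "j \<le> m + n"
  shows "FF (k+1) j * (K k * Kinv (k+1)) = phi (inverse (qi m (k+1))) * (K k * Kinv (k+1) * FF (k+1) j)"
proof -
  have "K k * Kinv (k+1) * FF (k+1) j = phi (\<Prod>l\<in>{k+1..<j}. qi m k powi (- kexp k l) * qi m (k+1) powi (kexp (k+1) l)) * (FF (k+1) j * (K k * Kinv (k+1)))"
  proof (rule FF_wt)
    show "k + 1 < j" using assms by simp
  next
    fix l assume "k + 1 \<le> l" "l < j"
    then show "K k * Kinv (k+1) * F l = phi (qi m k powi (- kexp k l) * qi m (k+1) powi (kexp (k+1) l)) * (F l * (K k * Kinv (k+1)))"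
      by (intro HF) (use assms in auto)
  qed
  also have "(\<Prod>l\<in>{k+1..<j}. qi m k powi (- kexp k l) * qi m (k+1) powi (kexp (k+1) l)) = qi m (k+1)"
    by (rule prod_delta_k) (use assms in \<open>auto simp: kexp_def\<close>)
  finally show ?thesis by (intro swap_inv) auto
qed

lemma H'_Y: assumes "1 \<le> k" "k + 1 < j" "j \<le> m + n"
  shows "FF (k+1) j * (Kinv k * K (k+1)) = phi (qi m (k+1)) * (Kinv k * K (k+1) * FF (k+1) j)"
proof -
  have "Kinv k * K (k+1) * FF (k+1) j = phi (\<Prod>l\<in>{k+1..<j}. qi m k powi (kexp k l) * qi m (k+1) powi (- kexp (k+1) l)) * (FF (k+1) j * (Kinv k * K (k+1)))"
  proof (rule FF_wt)
    show "k + 1 < j" using assms by simp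
  next
    fix l assume "k + 1 \<le> l" "l < j"
    then show "Kinv k * K (k+1) * F l = phi (qi m k powi (kexp k l) * qi m (k+1) powi (- kexp (k+1) l)) * (F l * (Kinv k * K (k+1)))"
      by (intro H'F) (use assms in auto)
  qed
  also have "(\<Prod>l\<in>{k+1..<j}. qi m k powi (kexp k l) * qi m (k+1) powi (- kexp (k+1) l)) = inverse (qi m (k+1))"
    by (rule prod_delta_k) (use assms in \<open>auto simp: kexp_def power_int_minus\<close>)
  finally show ?thesis by (metis inverse_inverse_eq inverse_nonzero_iff_nonzero qi_nz swap_inv)
qed

lemma H_Fk1: assumes "2 \<le> k" "k < m + n"
  shows "F (k-1) * (K k * Kinv (k+1)) = phi (inverse (qi m k)) * (K k * Kinv (k+1) * F (k-1))"
proof -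
  have "K k * Kinv (k+1) * F (k-1) = phi (qi m k powi (- kexp k (k-1)) * qi m (k+1) powi (kexp (k+1) (k-1))) * (F (k-1) * (K k * Kinv (k+1)))"
    by (rule HF) (use assms in auto)
  also have "qi m k powi (- kexp k (k-1)) * qi m (k+1) powi (kexp (k+1) (k-1)) = qi m k"
  proof -
    obtain k' where "k = Suc (Suc k')" using assms(1) by (metis add_2_eq_Suc le_Suc_ex)
    then show ?thesis by (simp add: kexp_def)
  qed
  finally show ?thesis by (intro swap_inv) auto
qed

lemma H'_Fk1: assumes "2 \<le> k" "k < m + n"
  shows "F (k-1) * (Kinv k * K (k+1)) = phi (qi m k) * (Kinv k * K (k+1) * F (k-1))"
proof -
  have "Kinv k * K (k+1) * F (k-1) = phi (qi m k powi (kexp k (k-1)) * qi m (k+1) powi (- kexp (k+1) (k-1))) * (F (k-1) * (Kinv k * K (k+1)))"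
    by (rule H'F) (use assms in auto)
  also have "qi m k powi (kexp k (k-1)) * qi m (k+1) powi (- kexp (k+1) (k-1)) = inverse (qi m k)"
  proof -
    obtain k' where "k = Suc (Suc k')" using assms(1) by (metis add_2_eq_Suc le_Suc_ex)
    then show ?thesis by (simp add: kexp_def power_int_minus)
  qed
  finally show ?thesis by (metis inverse_inverse_eq inverse_nonzero_iff_nonzero qi_nz swap_inv)
qed

lemma H'_Fp: assumes "1 \<le> p" "p + 2 \<le> k" "k < m + n"
  shows "Kinv k * K (k+1) * F p = F p * (Kinv k * K (k+1))"
proof -
  have "Kinv k * K (k+1) * F p = phi (qi m k powi (kexp k p) * qi m (k+1) powi (- kexp (k+1) p)) * (F p * (Kinv k * K (k+1)))"
    by (rule H'F) (use assms in auto)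
  also have "qi m k powi (kexp k p) * qi m (k+1) powi (- kexp (k+1) p) = 1"
    using assms by (simp add: kexp_def)
  finally show ?thesis by simp
qed

lemma L2_core: assumes EF: "e*f = f*e + phi r * (h - h')" and EY: "e*y = y*e"
  and YH: "y*h = phi (inverse s) * (h*y)" and YH': "y*h' = phi s * (h'*y)"
  shows "e*(-(phi s * f * y) + y * f) = (-(phi s * f * y) + y * f) * e + phi (r * inverse s - s * r) * (h * y)"
proof -
  have EF': "e*(f*t) = f*(e*t) + phi r * (h*t) - phi r * (h'*t)" for t
    using arg_cong[OF EF, of "\<lambda>z. z * t"] by (simp add: algebra_simps)
  have EY': "e*(y*t) = y*(e*t)" for t using EY by (metis mult.assoc)
  show ?thesis by (simp add: algebra_simps sc EF EF' EY EY' YH YH' phi_diff)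
qed

lemma L3_core: assumes Ex: "e*x = x*e" and EW: "e*W = W*e + phi c * (h*y)"
  and xh: "x*h = phi (inverse s) * (h*x)" and xy: "x*y = y*x" and s: "s \<noteq> 0"
  shows "e*(-(phi s * x * W) + W * x) = (-(phi s * x * W) + W * x) * e"
proof -
  have Ex': "e*(x*t) = x*(e*t)" for t using Ex by (metis mult.assoc)
  have EW': "e*(W*t) = W*(e*t) + phi c * (h*(y*t))" for t
    using arg_cong[OF EW, of "\<lambda>z. z * t"] by (simp add: algebra_simps)
  have xh': "x*(h*t) = phi (inverse s) * (h*(x*t))" for t using xh by (metis mult.assoc phi_c2)
  have xy': "x*(y*t) = y*(x*t)" for t using xy by (metis mult.assoc)
  show ?thesis using s by (simp add: algebra_simps sc Ex Ex' EW EW' xh xh' xy xy')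
qed

lemma L4_base: assumes Ex: "e*x = x*e" and Ef: "e*f = f*e + phi r * (h - h')"
  and xh: "x*h = phi (inverse s) * (h*x)" and xh': "x*h' = phi s * (h'*x)" and s: "s \<noteq> 0"
  shows "e*(-(phi s * x * f) + f * x) = (-(phi s * x * f) + f * x) * e + phi (r * (s*s - 1)) * (h' * x)"
proof -
  have Ex': "e*(x*t) = x*(e*t)" for t using Ex by (metis mult.assoc)
  have Ef': "e*(f*t) = f*(e*t) + phi r * (h*t) - phi r * (h'*t)" for t
    using arg_cong[OF Ef, of "\<lambda>z. z * t"] by (simp add: algebra_simps)
  have xh2: "x*(h*t) = phi (inverse s) * (h*(x*t))" for t using xh by (metis mult.assoc phi_c2)
  have xh2': "x*(h'*t) = phi s * (h'*(x*t))" for t using xh' by (metis mult.assoc phi_c2)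
  show ?thesis using s by (simp add: algebra_simps sc Ex Ex' Ef Ef' xh xh2 xh' xh2' phi_diff)
qed

lemma L4_step: assumes Ex: "e*x = x*e" and EW: "e*W = W*e + phi g * (h'*V)" and xh': "x*h' = h'*x"
  shows "e*(-(phi s * x * W) + W * x) = (-(phi s * x * W) + W * x) * e + phi g * (h' * (-(phi s * x * V) + V * x))"
proof -
  have Ex': "e*(x*t) = x*(e*t)" for t using Ex by (metis mult.assoc)
  have EW': "e*(W*t) = W*(e*t) + phi g * (h'*(V*t))" for t
    using arg_cong[OF EW, of "\<lambda>z. z * t"] by (simp add: algebra_simps)
  have xh2: "x*(h'*t) = h'*(x*t)" for t using xh' by (metis mult.assoc)
  show ?thesis by (simp add: algebra_simps sc Ex Ex' EW EW' xh' xh2)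
qed

abbreviation HH where "HH k \<equiv> K k * Kinv (k+1)"
abbreviation HH' where "HH' k \<equiv> Kinv k * K (k+1)"

lemma EF_k: "1 \<le> k \<Longrightarrow> k < m + n \<Longrightarrow> k \<noteq> m \<Longrightarrow>
   E k * F k = F k * E k + phi (inverse (qi m k - inverse (qi m k))) * (HH k - HH' k)"
  using EF_same[of k] by simp

lemma L2: assumes "1 \<le> k" "k \<noteq> m" "k + 2 \<le> j" "j \<le> m + n"
  shows "\<exists>c. E k * FF k j = FF k j * E k + phi c * (HH k * FF (k+1) j)"
proof -
  have EY: "E k * FF (k+1) j = FF (k+1) j * E k" by (rule E_comm_FF) (use assms in auto)
  have YH: "FF (k+1) j * HH k = phi (inverse (qi m (k+1))) * (HH k * FF (k+1) j)"
    by (rule H_Y) (use assms in auto)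
  have YH': "FF (k+1) j * HH' k = phi (qi m (k+1)) * (HH' k * FF (k+1) j)"
    by (rule H'_Y) (use assms in auto)
  have EF: "E k * F k = F k * E k + phi (inverse (qi m k - inverse (qi m k))) * (HH k - HH' k)"
    by (rule EF_k) (use assms in auto)
  show ?thesis unfolding FF_left[OF assms(3)] using assms L2_core[OF EF EY YH YH'] by auto
qed

lemma L3: assumes "1 \<le> i" "i < k" "k \<noteq> m" "k + 2 \<le> j" "j \<le> m + n"
  shows "E k * FF i j = FF i j * E k"
  using assms
proof (induction "k - i" arbitrary: i rule: less_induct)
  case less
  show ?case
  proof (cases "i = k - 1")
    case True
    obtain c where c: "E k * FF k j = FF k j * E k + phi c * (HH k * FF (k+1) j)"
      using L2[of k j] less.prems by auto
    have Ex: "E k * F (k-1) = F (k-1) * E k" by (rule EF_comm) (use less.prems in auto)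
    have xh: "F (k-1) * HH k = phi (inverse (qi m k)) * (HH k * F (k-1))"
      by (rule H_Fk1) (use less.prems in auto)
    have xy: "F (k-1) * FF (k+1) j = FF (k+1) j * F (k-1)"
      by (rule FF_comm_F) (use less.prems in auto)
    have k1: "k - 1 + 1 = k" "k - 1 + 2 \<le> j" using less.prems by auto
    show ?thesis unfolding True FF_left[OF k1(2)] k1(1) by (rule L3_core[OF Ex c xh xy qi_nz])
  next
    case False
    then have ik: "i + 1 < k" using less.prems by simp
    have IH: "E k * FF (i+1) j = phi 1 * (FF (i+1) j * E k)"
      using less.hyps[of "i+1"] less.prems ik by simp
    have x: "E k * F i = F i * E k" by (rule EF_comm) (use less.prems ik in auto)
    have ij: "i + 2 \<le> j" using less.prems by simp
    show ?thesis unfolding FF_left[OF ij] using less.prems comm_step1[OF x IH] by simp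
  qed
qed

lemma L4: assumes "1 \<le> p" "p < k" "k \<noteq> m" "k < m + n"
  shows "\<exists>g. E k * FF p (k+1) = FF p (k+1) * E k + phi g * (HH' k * FF p k)"
  using assms
proof (induction "k - p" arbitrary: p rule: less_induct)
  case less
  show ?case
  proof (cases "p = k - 1")
    case True
    have Ex: "E k * F (k-1) = F (k-1) * E k" by (rule EF_comm) (use less.prems in auto)
    have Ef: "E k * F k = F k * E k + phi (inverse (qi m k - inverse (qi m k))) * (HH k - HH' k)"
      by (rule EF_k) (use less.prems in auto)
    have xh: "F (k-1) * HH k = phi (inverse (qi m k)) * (HH k * F (k-1))"
      by (rule H_Fk1) (use less.prems in auto)
    have xh': "F (k-1) * HH' k = phi (qi m k) * (HH' k * F (k-1))"
      by (rule H'_Fk1) (use less.prems in auto)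
    have k1: "k - 1 + 1 = k" "k - 1 + 2 \<le> k + 1" "Suc (k - 1) = k" using less.prems by auto
    have FFk: "FF (k-1) (k+1) = -(phi (qi m k) * F (k-1) * F k) + F k * F (k-1)"
      using FF_left[OF k1(2)] k1 by (simp del: FF_1) (metis FF_1 Suc_eq_plus1)
    have FFk': "FF (k-1) k = F (k-1)" using k1(3) FF_1[of "k-1"] by simp
    show ?thesis unfolding True FFk FFk' using L4_base[OF Ex Ef xh xh' qi_nz] by blast
  next
    case False
    then have pk: "p + 1 < k" using less.prems by simp
    have "\<exists>g. E k * FF (p+1) (k+1) = FF (p+1) (k+1) * E k + phi g * (HH' k * FF (p+1) k)"
      by (rule less.hyps) (use less.prems pk in auto)
    then obtain g where IH: "E k * FF (p+1) (k+1) = FF (p+1) (k+1) * E k + phi g * (HH' k * FF (p+1) k)" by blast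
    have x: "E k * F p = F p * E k" by (rule EF_comm) (use less.prems pk in auto)
    have xh': "F p * HH' k = HH' k * F p" using H'_Fp[of p k] less.prems pk by simp
    have e1: "FF p (k+1) = -(phi (qi m (p+1)) * F p * FF (p+1) (k+1)) + FF (p+1) (k+1) * F p"
      by (rule FF_left) (use pk in simp)
    have e2: "FF p k = -(phi (qi m (p+1)) * F p * FF (p+1) k) + FF (p+1) k * F p"
      by (rule FF_left) (use pk in simp)
    show ?thesis unfolding e1 e2 using L4_step[OF x IH xh'] by blast
  qed
qed

lemma R3: assumes "1 \<le> i" "i < l" "l \<le> m" "m < k" "k < m + n"
  shows "\<exists>a b. FF i k * FF l (k+1) = phi a * (FF l (k+1) * FF i k) + phi b * (FF i (k+1) * FF l k)"
proof -
  obtain c where c: "c \<noteq> 0" "FF l k * FF i k = phi c * (FF i k * FF l k)"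
    using FF_shared_right[of i l k] assms by auto
  have hby: "FF i k * FF l k = phi (inverse c) * (FF l k * FF i k)" using swap_inv[OF c(2) c(1)] .
  obtain d where ya: "FF l k * FF i (k+1) = phi d * (FF i (k+1) * FF l k)"
    using FF_nested[of i l k "k+1"] assms by auto
  have A: "FF i (k+1) = -(phi (qi m k) * FF i k * F k) + F k * FF i k"
    using FF_right[of i "k+1"] assms by simp
  have Al: "FF l (k+1) = -(phi (qi m k) * FF l k * F k) + F k * FF l k"
    using FF_right[of l "k+1"] assms by simp
  show ?thesis unfolding Al using r3_core[OF hby ya A qi_nz] by blast
qed

lemma Qbase: assumes "1 \<le> r" "r \<le> i" "i \<le> m" "m < k" "k \<le> m + n"
  shows "FF i k * prod_list (map (\<lambda>p. FF p k) [r..<m+1]) = 0"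
  using assms
proof (induction "i - r" arbitrary: r)
  case 0
  then have ri: "r = i" by simp
  have lst: "[r..<m+1] = r # [r+1..<m+1]" using 0 by (simp add: upt_conv_Cons)
  have sq: "FF i k * FF i k = 0" using FF_sq[of i k] 0 ri by simp
  let ?R = "prod_list (map (\<lambda>p. FF p k) [r+1..<m+1])"
  have "FF i k * (FF i k * ?R) = (FF i k * FF i k) * ?R" by (simp only: mult.assoc)
  also have "\<dots> = 0" by (simp only: sq mult_zero_left)
  moreover have P: "prod_list (map (\<lambda>p. FF p k) [r..<m+1]) = FF r k * ?R" unfolding lst by simp
  ultimately show ?case by (simp only: P ri)
next
  case (Suc d)
  let ?R = "prod_list (map (\<lambda>p. FF p k) [r+1..<m+1])"
  have ri: "r < i" using Suc.hyps(2) by arith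
  have lst: "[r..<m+1] = r # [r+1..<m+1]" using ri Suc.prems by (simp add: upt_conv_Cons)
  obtain c where c: "c \<noteq> 0" "FF i k * FF r k = phi c * (FF r k * FF i k)"
    using FF_shared_right[of r i k] Suc.prems ri by auto
  have IH: "FF i k * ?R = 0"
    by (rule Suc.hyps(1)) (use Suc.prems Suc.hyps(2) in auto)
  have "FF i k * (FF r k * ?R) = (FF i k * FF r k) * ?R" by (simp only: mult.assoc)
  also have "\<dots> = phi c * (FF r k * (FF i k * ?R))" by (simp only: c(2) mult.assoc)
  also have "\<dots> = 0" by (simp only: IH mult_zero_right)
  moreover have P: "prod_list (map (\<lambda>p. FF p k) [r..<m+1]) = FF r k * ?R" unfolding lst by simp
  ultimately show ?case by (simp only: P)
qed

lemma Qlem: assumes "1 \<le> i" "i < l" "l \<le> m + 1" "m < k" "k < m + n"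
  shows "FF i k * (prod_list (map (\<lambda>p. FF p (k+1)) [l..<m+1]) * prod_list (map (\<lambda>p. FF p k) [1..<m+1])) = 0"
  using assms
proof (induction "m + 1 - l" arbitrary: i l)
  case 0
  then have "l = m + 1" by simp
  then show ?case using Qbase[of 1 i k] 0 by simp
next
  case (Suc d)
  let ?B = "prod_list (map (\<lambda>p. FF p k) [1..<m+1])"
  let ?P = "prod_list (map (\<lambda>p. FF p (k+1)) [l+1..<m+1])"
  have lm: "l < m + 1" using Suc.hyps(2) by arith
  have lst: "[l..<m+1] = l # [l+1..<m+1]" using lm by (simp add: upt_conv_Cons)
  obtain a b where ab: "FF i k * FF l (k+1) = phi a * (FF l (k+1) * FF i k) + phi b * (FF i (k+1) * FF l k)"
    using R3[of i l k] Suc.prems lm by auto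
  have I1: "FF i k * (?P * ?B) = 0" by (rule Suc.hyps(1)) (use Suc.prems Suc.hyps(2) in auto)
  have I2: "FF l k * (?P * ?B) = 0" by (rule Suc.hyps(1)) (use Suc.prems Suc.hyps(2) in auto)
  have P: "prod_list (map (\<lambda>p. FF p (k+1)) [l..<m+1]) = FF l (k+1) * ?P" unfolding lst by simp
  have "FF i k * (FF l (k+1) * (?P * ?B)) = (FF i k * FF l (k+1)) * (?P * ?B)" by (simp only: mult.assoc)
  also have "\<dots> = phi a * (FF l (k+1) * (FF i k * (?P * ?B))) + phi b * (FF i (k+1) * (FF l k * (?P * ?B)))"
    unfolding ab by (simp only: distrib_right mult.assoc)
  also have "\<dots> = 0" by (simp only: I1 I2 mult_zero_right add_0_right)
  finally show ?case by (simp only: P mult.assoc)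
qed

lemma comm_prod_list: "(\<And>x. x \<in> set xs \<Longrightarrow> e * x = x * e) \<Longrightarrow> e * prod_list xs = prod_list xs * e"
proof (induction xs)
  case Nil then show ?case by simp
next
  case (Cons a xs)
  then have h1: "e * a = a * e" and h2: "e * prod_list xs = prod_list xs * e" by auto
  have "e * prod_list (a # xs) = (e * a) * prod_list xs" by (simp add: mult.assoc)
  also have "\<dots> = a * (e * prod_list xs)" by (simp only: h1 mult.assoc)
  also have "\<dots> = prod_list (a # xs) * e" by (simp add: h2 mult.assoc)
  finally show ?case .
qed

lemma pair_comm: assumes "m < k" "k < m + n"
  shows "E k * (prod_list (map (\<lambda>p. FF p (k+1)) [1..<m+1]) * prod_list (map (\<lambda>p. FF p k) [1..<m+1]))
       = (prod_list (map (\<lambda>p. FF p (k+1)) [1..<m+1]) * prod_list (map (\<lambda>p. FF p k) [1..<m+1])) * E k"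
proof -
  let ?B = "prod_list (map (\<lambda>p. FF p k) [1..<m+1])"
  have km: "k \<noteq> m" "1 \<le> k" using assms m1 by auto
  have EB: "E k * ?B = ?B * E k"
    by (rule comm_prod_list) (use assms km in \<open>auto intro!: E_comm_FF\<close>)
  have "l \<ge> 1 \<Longrightarrow> l \<le> m + 1 \<Longrightarrow> E k * (prod_list (map (\<lambda>p. FF p (k+1)) [l..<m+1]) * ?B)
       = (prod_list (map (\<lambda>p. FF p (k+1)) [l..<m+1]) * ?B) * E k" for l
  proof (induction "m + 1 - l" arbitrary: l)
    case 0 then have "l = m + 1" by simp
    then show ?case using EB by simp
  next
    case (Suc d)
    let ?P = "prod_list (map (\<lambda>p. FF p (k+1)) [l+1..<m+1])"
    have lm: "l < m + 1" using Suc.hyps(2) by arith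
    have lst: "[l..<m+1] = l # [l+1..<m+1]" using lm by (simp add: upt_conv_Cons)
    have IH: "E k * (?P * ?B) = (?P * ?B) * E k" by (rule Suc.hyps(1)) (use Suc in auto)
    obtain g where g: "E k * FF l (k+1) = FF l (k+1) * E k + phi g * (HH' k * FF l k)"
      using L4[of l k] Suc.prems lm assms km by auto
    have Q: "FF l k * (?P * ?B) = 0" by (rule Qlem) (use Suc.prems lm assms in auto)
    have P: "prod_list (map (\<lambda>p. FF p (k+1)) [l..<m+1]) = FF l (k+1) * ?P" unfolding lst by simp
    have "E k * (FF l (k+1) * (?P * ?B)) = (E k * FF l (k+1)) * (?P * ?B)" by (simp only: mult.assoc)
    also have "\<dots> = FF l (k+1) * (E k * (?P * ?B)) + phi g * (HH' k * (FF l k * (?P * ?B)))"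
      unfolding g by (simp only: distrib_right mult.assoc)
    also have "\<dots> = FF l (k+1) * ((?P * ?B) * E k)" by (simp only: IH Q mult_zero_right add_0_right)
    finally show ?case by (simp only: P mult.assoc)
  qed
  then show ?thesis by simp
qed

abbreviation BB where "BB j \<equiv> prod_list (map (\<lambda>i. FF i j) [1..<m+1])"

lemma B_comm_small: assumes "1 \<le> k" "k < m" "m < j" "j \<le> m + n"
  shows "E k * BB j = BB j * E k"
proof -
  let ?f = "\<lambda>i. FF i j"
  let ?L = "prod_list (map ?f [1..<k])"
  let ?R = "prod_list (map ?f [k+2..<m+1])"
  have e: "k + (m + 1 - k) = m + 1" using assms by simp
  have l1: "[1..<m+1] = [1..<k] @ [k..<m+1]"
    using upt_add_eq_append[of 1 k "m+1-k"] assms unfolding e by simp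
  have l2: "[k..<m+1] = k # [Suc k..<m+1]" by (rule upt_conv_Cons) (use assms in simp)
  have l3: "[Suc k..<m+1] = Suc k # [Suc (Suc k)..<m+1]" by (rule upt_conv_Cons) (use assms in simp)
  have lst: "[1..<m+1] = [1..<k] @ k # (k+1) # [k+2..<m+1]"
    unfolding l1 l2 l3 by simp
  have EL: "E k * ?L = ?L * E k"
  proof (rule comm_prod_list)
    fix y assume "y \<in> set (map ?f [1..<k])"
    then obtain i where i: "y = FF i j" "1 \<le> i" "i < k" by (auto simp del: upt_Suc)
    show "E k * y = y * E k" unfolding i(1) by (rule L3) (use assms i in auto)
  qed
  have ER: "E k * ?R = ?R * E k"
  proof (rule comm_prod_list)
    fix y assume "y \<in> set (map ?f [k+2..<m+1])"
    then obtain i where i: "y = FF i j" "k + 2 \<le> i" "i < m + 1" by (auto simp del: upt_Suc)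
    show "E k * y = y * E k" unfolding i(1) by (rule E_comm_FF) (use assms i in auto)
  qed
  obtain c where c: "E k * FF k j = FF k j * E k + phi c * (HH k * FF (k+1) j)"
    using L2[of k j] assms by auto
  have sq0: "FF (k+1) j * FF (k+1) j = 0" by (rule FF_sq) (use assms in auto)
  have sq: "FF (k+1) j * (FF (k+1) j * ?R) = 0" by (simp only: mult.assoc[symmetric] sq0 mult_zero_left)
  have mid: "E k * (FF k j * (FF (k+1) j * ?R)) = (FF k j * (FF (k+1) j * ?R)) * E k"
  proof -
    have EY: "E k * FF (k+1) j = FF (k+1) j * E k" by (rule E_comm_FF) (use assms in auto)
    have "E k * (FF k j * (FF (k+1) j * ?R)) = (E k * FF k j) * (FF (k+1) j * ?R)" by (simp only: mult.assoc)
    also have "\<dots> = FF k j * (E k * FF (k+1) j * ?R) + phi c * (HH k * (FF (k+1) j * (FF (k+1) j * ?R)))"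
      unfolding c by (simp only: distrib_right mult.assoc)
    also have "\<dots> = FF k j * (FF (k+1) j * (E k * ?R))" by (simp only: sq EY mult.assoc mult_zero_right add_0_right)
    also have "\<dots> = (FF k j * (FF (k+1) j * ?R)) * E k" by (simp only: ER mult.assoc)
    finally show ?thesis .
  qed
  have "E k * (?L * (FF k j * (FF (k+1) j * ?R))) = (E k * ?L) * (FF k j * (FF (k+1) j * ?R))" by (simp only: mult.assoc)
  also have "\<dots> = ?L * (E k * (FF k j * (FF (k+1) j * ?R)))" by (simp only: EL mult.assoc)
  also have "\<dots> = ?L * (FF k j * (FF (k+1) j * ?R)) * E k" by (simp only: mid mult.assoc)
  finally have "E k * (?L * (FF k j * (FF (k+1) j * ?R))) = ?L * (FF k j * (FF (k+1) j * ?R)) * E k" .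
  then show ?thesis unfolding lst by (simp only: list.map map_append prod_list.append prod_list.Cons mult.assoc)
qed

lemma prod_list_concat': "prod_list (concat xss) = prod_list (map prod_list xss)"
  by (induction xss) auto

lemma FI1_blocks: "FI1 phi m n F = prod_list (map BB (rev [m+1..<m+n+1]))"
  unfolding FI1_def I1_list_def map_concat prod_list_concat' by (simp add: comp_def)

lemma main_comm: assumes "1 \<le> k" "k < m + n" "k \<noteq> m"
  shows "E k * FI1 phi m n F = FI1 phi m n F * E k"
proof (cases "k < m")
  case True
  show ?thesis unfolding FI1_blocks
  proof (rule comm_prod_list)
    fix x assume "x \<in> set (map BB (rev [m+1..<m+n+1]))"
    then obtain j where j: "x = BB j" "m < j" "j \<le> m + n" by auto
    show "E k * x = x * E k" unfolding j(1) by (rule B_comm_small) (use assms True j in auto)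
  qed
next
  case False
  then have km: "m < k" using assms by simp
  have lst: "rev [m+1..<m+n+1] = rev [k+2..<m+n+1] @ (k+1) # k # rev [m+1..<k]"
  proof -
    have mk: "m + 1 \<le> k" using km by simp
    have e: "k + (m + n + 1 - k) = m + n + 1" using assms by simp
    have a1: "[m+1..<m+n+1] = [m+1..<k] @ [k..<m+n+1]"
      using upt_add_eq_append[OF mk, of "m+n+1-k"] unfolding e .
    have a2: "[k..<m+n+1] = k # [Suc k..<m+n+1]" by (rule upt_conv_Cons) (use assms in simp)
    have a3: "[Suc k..<m+n+1] = Suc k # [Suc (Suc k)..<m+n+1]" by (rule upt_conv_Cons) (use assms in simp)
    show ?thesis unfolding a1 a2 a3 by simp
  qed
  have E1: "E k * prod_list (map BB (rev [k+2..<m+n+1])) = prod_list (map BB (rev [k+2..<m+n+1])) * E k"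
  proof (rule comm_prod_list)
    fix x assume "x \<in> set (map BB (rev [k+2..<m+n+1]))"
    then obtain j where j: "x = BB j" "k + 2 \<le> j" "j \<le> m + n" by auto
    show "E k * x = x * E k" unfolding j(1)
    proof (rule comm_prod_list)
      fix y assume "y \<in> set (map (\<lambda>i. FF i j) [1..<m+1])"
      then obtain i where i: "y = FF i j" "1 \<le> i" "i < m + 1" by (auto simp del: upt_Suc)
      show "E k * y = y * E k" unfolding i(1) by (rule L3) (use assms km j i in auto)
    qed
  qed
  have E2: "E k * prod_list (map BB (rev [m+1..<k])) = prod_list (map BB (rev [m+1..<k])) * E k"
  proof (rule comm_prod_list)
    fix x assume "x \<in> set (map BB (rev [m+1..<k]))"
    then obtain j where j: "x = BB j" "j < k" by auto
    show "E k * x = x * E k" unfolding j(1)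
    proof (rule comm_prod_list)
      fix y assume "y \<in> set (map (\<lambda>i. FF i j) [1..<m+1])"
      then obtain i where i: "y = FF i j" "1 \<le> i" "i < m + 1" by (auto simp del: upt_Suc)
      show "E k * y = y * E k" unfolding i(1) by (rule E_comm_FF) (use assms km j i in auto)
    qed
  qed
  have E3: "E k * (BB (k+1) * BB k) = (BB (k+1) * BB k) * E k" by (rule pair_comm[OF km assms(2)])
  let ?A = "prod_list (map BB (rev [k+2..<m+n+1]))"
  let ?C = "prod_list (map BB (rev [m+1..<k]))"
  have P: "prod_list (map BB (rev [m+1..<m+n+1])) = ?A * (BB (k+1) * (BB k * ?C))"
    unfolding lst by (simp only: list.map map_append prod_list.append prod_list.Cons)
  have "E k * (?A * (BB (k+1) * (BB k * ?C))) = ?A * ((E k * (BB (k+1) * BB k)) * ?C)"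
    using E1 by (simp only: mult.assoc[symmetric])
  also have "\<dots> = ?A * (BB (k+1) * BB k * (E k * ?C))" by (simp only: E3 mult.assoc)
  also have "\<dots> = ?A * (BB (k+1) * (BB k * ?C)) * E k" by (simp only: E2 mult.assoc)
  finally show ?thesis unfolding FI1_blocks P .
qed

lemma Eroot_comm: "(\<And>l. i \<le> l \<Longrightarrow> l < i + d \<Longrightarrow> E l * X = X * E l) \<Longrightarrow>
   Eroot phi m E i d * X = X * Eroot phi m E i d"
proof (induction d arbitrary: i rule: less_induct)
  case (less d)
  show ?case
  proof (cases d)
    case 0 then show ?thesis by simp
  next
    case (Suc d1)
    show ?thesis
    proof (cases d1)
      case 0 then show ?thesis using Suc less.prems[of i] by simp
    next
      case (Suc k)
      let ?R = "Eroot phi m E (Suc i) (Suc k)"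
      have IH: "?R * X = X * ?R" using less.IH[of "Suc k" "Suc i"] less.prems \<open>d = Suc d1\<close> Suc by simp
      have Ei: "E i * X = X * E i" using less.prems[of i] \<open>d = Suc d1\<close> by simp
      have IH': "?R * (X * t) = X * (?R * t)" for t using IH by (metis mult.assoc)
      have Ei': "E i * (X * t) = X * (E i * t)" for t using Ei by (metis mult.assoc)
      show ?thesis using \<open>d = Suc d1\<close> Suc
        by (simp add: algebra_simps sc IH IH' Ei Ei')
    qed
  qed
qed

end

theorem lemma5p8:
  fixes m n :: nat
    and phi :: "ratq \<Rightarrow> 'a::ring_1"
    and K Kinv E F :: "nat \<Rightarrow> 'a"
  assumes "1 \<le> m" and "1 \<le> n"
    and "uq_rels m n phi K Kinv E F"
    and "(i, j) \<in> I0 m n"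
  shows "Eij phi m E i j * FI1 phi m n F = FI1 phi m n F * Eij phi m E i j"
proof -
  interpret uq m n phi K Kinv E F by (rule uq.intro) (use assms in auto)
  have ij: "i < j" "1 \<le> i" "j \<le> m + n" "\<And>l. i \<le> l \<Longrightarrow> l < j \<Longrightarrow> l \<noteq> m"
    using assms(4) unfolding I0_def by auto
  have "Eroot phi m E i (j - i) * FI1 phi m n F = FI1 phi m n F * Eroot phi m E i (j - i)"
  proof (rule Eroot_comm)
    fix l assume "i \<le> l" "l < i + (j - i)"
    then show "E l * FI1 phi m n F = FI1 phi m n F * E l"
      using ij by (intro main_comm) auto
  qed
  then show ?thesis by (simp add: Eij_def)
qed

end
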